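(* Let $(X_i)_{i\ge1}$ be a sequence in $\mathcal{H}_{\mbox{s-conv}}(S^n)$ converging in the Pompeiu-Hausdorff metric to $X\in\mathcal{H}(S^n)$. Then $X=X^{\circ\circ}$.
   Context: $S^n$ is the unit sphere in $\mathbb{R}^{n+1}$, $n\ge1$; $|PQ|=\arccos(P\cdot Q)$. $H(P)=\{Q\in S^n:P\cdot Q\ge0\}$ and $W^\circ=\bigcap_{P\in W}H(P)$, $W^{\circ\circ}=(W^\circ)^\circ$. $\mathcal{H}(S^n)$ is the set of non-empty closed subsets of $S^n$ with the Pompeiu-Hausdorff metric $h(A,B)=\max\{\max_{x\in A}\min_{y\in B}|xy|,\ \max_{y\in B}\min_{x\in A}|xy|\}$. A subset is hemispherical if it is disjoint from $H(P)$ for some $P\in S^n$. For $P,Q$ in a hemispherical set, the arc $PQ=\{((1-t)P+tQ)/\|(1-t)P+tQ\|:0\le t\le1\}$; a hemispherical set $W$ is spherical convex if $PQ\subset W$ for all $P,Q\in W$. $\mathcal{H}_{\mbox{s-conv}}(S^n)$ is the set of non-empty closed spherical convex subsets of $S^n$. *)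

theory Defs
  imports "HOL-Analysis.Analysis"
begin

text \<open>The unit sphere S^n is modelled as sphere 0 1 in a Euclidean space of dimension n+1.\<close>

definition Sph :: "'a::euclidean_space set" where
  "Sph = sphere 0 1"

definition sdist :: "'a::euclidean_space \<Rightarrow> 'a \<Rightarrow> real" where
  "sdist P Q = arccos (P \<bullet> Q)"

definition hemi :: "'a::euclidean_space \<Rightarrow> 'a set" where
  "hemi P = {Q \<in> Sph. P \<bullet> Q \<ge> 0}"

definition polar :: "'a::euclidean_space set \<Rightarrow> 'a set" where
  "polar W = {Q \<in> Sph. \<forall>P\<in>W. Q \<in> hemi P}"

definition sph_hausdist :: "'a::euclidean_space set \<Rightarrow> 'a set \<Rightarrow> real" where
  "sph_hausdist A B = max (SUP x\<in>A. INF y\<in>B. sdist x y) (SUP y\<in>B. INF x\<in>A. sdist x y)"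

definition HS :: "'a::euclidean_space set set" where
  "HS = {A. A \<noteq> {} \<and> closed A \<and> A \<subseteq> Sph}"

definition hemispherical :: "'a::euclidean_space set \<Rightarrow> bool" where
  "hemispherical W \<longleftrightarrow> W \<subseteq> Sph \<and> (\<exists>P\<in>Sph. W \<inter> hemi P = {})"

definition sarc :: "'a::euclidean_space \<Rightarrow> 'a \<Rightarrow> 'a set" where
  "sarc P Q = {((1 - t) *\<^sub>R P + t *\<^sub>R Q) /\<^sub>R norm ((1 - t) *\<^sub>R P + t *\<^sub>R Q) | t. 0 \<le> t \<and> t \<le> 1}"

definition sconvex :: "'a::euclidean_space set \<Rightarrow> bool" where
  "sconvex W \<longleftrightarrow> hemispherical W \<and> (\<forall>P\<in>W. \<forall>Q\<in>W. sarc P Q \<subseteq> W)"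

definition HS_sconv :: "'a::euclidean_space set set" where
  "HS_sconv = {A \<in> HS. sconvex A}"

end

theory Submission
  imports Defs
begin

lemma sph_inner_bounds:
  assumes "P \<in> Sph" "Q \<in> Sph"
  shows "-1 \<le> P \<bullet> Q" "P \<bullet> Q \<le> 1"
proof -
  have "\<bar>P \<bullet> Q\<bar> \<le> norm P * norm Q" by (rule Cauchy_Schwarz_ineq2)
  moreover have "norm P = 1" "norm Q = 1" using assms by (auto simp: Sph_def)
  ultimately show "-1 \<le> P \<bullet> Q" "P \<bullet> Q \<le> 1" by auto
qed

lemma sdist_bounds:
  assumes "P \<in> Sph" "Q \<in> Sph"
  shows "0 \<le> sdist P Q" "sdist P Q \<le> pi"
  using sph_inner_bounds[OF assms] by (auto simp: sdist_def intro: arccos_lbound arccos_ubound)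

lemma sdist_commute: "sdist P Q = sdist Q P"
  by (simp add: sdist_def inner_commute)

lemma sph_norm_diff_sq:
  assumes "P \<in> Sph" "Q \<in> Sph"
  shows "(norm (P - Q))^2 = 2 - 2 * cos (sdist P Q)"
proof -
  have n: "norm P = 1" "norm Q = 1" using assms by (auto simp: Sph_def)
  have "cos (sdist P Q) = P \<bullet> Q" using sph_inner_bounds[OF assms] by (simp add: sdist_def cos_arccos)
  moreover have "(norm (P - Q))^2 = P \<bullet> P - 2 * (P \<bullet> Q) + Q \<bullet> Q"
    by (simp add: power2_norm_eq_inner algebra_simps inner_commute)
  moreover have "P \<bullet> P = 1" "Q \<bullet> Q = 1" using n by (simp_all add: norm_eq_1)
  ultimately show ?thesis by simp
qed

lemma sdist_tendsto_diff:
  assumes ev: "eventually (\<lambda>i. a i \<in> Sph \<and> b i \<in> Sph) sequentially"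
    and lim: "(\<lambda>i. sdist (a i) (b i)) \<longlonglongrightarrow> 0"
  shows "(\<lambda>i. a i - b i) \<longlonglongrightarrow> 0"
proof -
  have "(\<lambda>i. 2 - 2 * cos (sdist (a i) (b i))) \<longlonglongrightarrow> 2 - 2 * cos 0"
    by (intro tendsto_intros lim)
  hence "(\<lambda>i. 2 - 2 * cos (sdist (a i) (b i))) \<longlonglongrightarrow> 0" by simp
  hence "(\<lambda>i. (norm (a i - b i))^2) \<longlonglongrightarrow> 0"
    by (rule Lim_transform_eventually) (use ev in \<open>auto elim!: eventually_mono simp: sph_norm_diff_sq\<close>)
  hence "(\<lambda>i. sqrt ((norm (a i - b i))^2)) \<longlonglongrightarrow> sqrt 0" by (intro tendsto_intros)
  hence "(\<lambda>i. norm (a i - b i)) \<longlonglongrightarrow> 0" by simp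
  thus ?thesis by (simp add: tendsto_norm_zero_iff)
qed

lemma inf_le_haus1:
  assumes "A \<subseteq> Sph" "B \<subseteq> Sph" "B \<noteq> {}" "x \<in> A"
  shows "(INF y\<in>B. sdist x y) \<le> sph_hausdist A B"
proof -
  have "bdd_above ((\<lambda>x. INF y\<in>B. sdist x y) ` A)"
  proof (rule bdd_aboveI2)
    fix x assume "x \<in> A"
    obtain y where "y \<in> B" using assms by auto
    have "(INF y\<in>B. sdist x y) \<le> sdist x y"
      by (rule cINF_lower) (use \<open>y\<in>B\<close> \<open>x\<in>A\<close> assms sdist_bounds in \<open>auto intro!: bdd_belowI2\<close>)
    also have "\<dots> \<le> pi" using sdist_bounds \<open>y\<in>B\<close> \<open>x\<in>A\<close> assms by blast
    finally show "(INF y\<in>B. sdist x y) \<le> pi" .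
  qed
  hence "(INF y\<in>B. sdist x y) \<le> (SUP x\<in>A. INF y\<in>B. sdist x y)"
    using assms(4) by (rule cSUP_upper2) simp
  thus ?thesis unfolding sph_hausdist_def by linarith
qed

lemma inf_le_haus2:
  assumes "A \<subseteq> Sph" "B \<subseteq> Sph" "A \<noteq> {}" "y \<in> B"
  shows "(INF x\<in>A. sdist x y) \<le> sph_hausdist A B"
proof -
  have "(INF x\<in>A. sdist x y) = (INF x\<in>A. sdist y x)" by (simp add: sdist_commute)
  also have "\<dots> \<le> sph_hausdist B A" by (rule inf_le_haus1) (use assms in auto)
  also have "\<dots> = sph_hausdist A B"
    by (simp add: sph_hausdist_def sdist_commute max.commute)
  finally show ?thesis .
qed

lemma pick1:
  assumes "A \<subseteq> Sph" "B \<subseteq> Sph" "B \<noteq> {}" "x \<in> A" "e > 0"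
  shows "\<exists>y\<in>B. sdist x y < sph_hausdist A B + e"
proof -
  have "(INF y\<in>B. sdist x y) < sph_hausdist A B + e" using inf_le_haus1[OF assms(1-4)] assms(5) by linarith
  thus ?thesis
    by (subst (asm) cINF_less_iff) (use assms sdist_bounds in \<open>auto intro!: bdd_belowI2\<close>)
qed

lemma pick2:
  assumes "A \<subseteq> Sph" "B \<subseteq> Sph" "A \<noteq> {}" "y \<in> B" "e > 0"
  shows "\<exists>x\<in>A. sdist x y < sph_hausdist A B + e"
proof -
  have "(INF x\<in>A. sdist x y) < sph_hausdist A B + e" using inf_le_haus2[OF assms(1-4)] assms(5) by linarith
  thus ?thesis
    by (subst (asm) cINF_less_iff) (use assms sdist_bounds in \<open>auto intro!: bdd_belowI2\<close>)
qed

theorem lemma5: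
  fixes Xs :: "nat \<Rightarrow> 'a::euclidean_space set" and X :: "'a set"
  assumes "DIM('a) \<ge> 2"
    and "\<forall>i\<ge>1. Xs i \<in> HS_sconv"
    and "X \<in> HS"
    and "(\<lambda>i. sph_hausdist (Xs i) X) \<longlonglongrightarrow> 0"
  shows "X = polar (polar X)"
proof -
  define h where "h i = sph_hausdist (Xs i) X" for i
  have hlim: "(\<lambda>i. h i + inverse (real (Suc i))) \<longlonglongrightarrow> 0"
    using tendsto_add[OF assms(4) LIMSEQ_inverse_real_of_nat] by (simp add: h_def)
  have Xi: "Xs i \<noteq> {}" "Xs i \<subseteq> Sph" "\<forall>P\<in>Xs i. \<forall>Q\<in>Xs i. sarc P Q \<subseteq> Xs i" if "i \<ge> 1" for i
    using assms(2) that by (auto simp: HS_sconv_def HS_def sconvex_def)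
  have XS: "X \<noteq> {}" "X \<subseteq> Sph" "closed X" using assms(3) by (auto simp: HS_def)
  have ev1: "eventually (\<lambda>i. i \<ge> (1::nat)) sequentially" by (rule eventually_ge_at_top)
  have sq: "(\<lambda>i. sdist (a i) (b i)) \<longlonglongrightarrow> 0"
    if "\<forall>i\<ge>1. a i \<in> Sph \<and> b i \<in> Sph \<and> sdist (a i) (b i) < h i + inverse (real (Suc i))" for a b
  proof (rule tendsto_sandwich[OF _ _ tendsto_const hlim])
    show "eventually (\<lambda>i. 0 \<le> sdist (a i) (b i)) sequentially"
      using ev1 by eventually_elim (use that sdist_bounds in blast)
    show "eventually (\<lambda>i. sdist (a i) (b i) \<le> h i + inverse (real (Suc i))) sequentially"
      using ev1 by eventually_elim (use that in force)
  qed
  have H1: "\<exists>s. (\<forall>i\<ge>1. s i \<in> Xs i) \<and> s \<longlonglongrightarrow> x" if "x \<in> X" for x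
  proof -
    define s where "s i = (SOME z. i \<ge> 1 \<longrightarrow> z \<in> Xs i \<and> sdist z x < h i + inverse (real (Suc i)))" for i
    have s: "s i \<in> Xs i \<and> sdist (s i) x < h i + inverse (real (Suc i))" if "i \<ge> 1" for i
    proof -
      have "\<exists>z. i \<ge> 1 \<longrightarrow> z \<in> Xs i \<and> sdist z x < h i + inverse (real (Suc i))"
        using pick2[OF Xi(2)[OF that] XS(2) Xi(1)[OF that] \<open>x\<in>X\<close>, of "inverse (real (Suc i))"]
        unfolding h_def by auto
      from someI_ex[OF this] that show ?thesis unfolding s_def by blast
    qed
    have "(\<lambda>i. s i - x) \<longlonglongrightarrow> 0"
    proof (rule sdist_tendsto_diff)
      show "eventually (\<lambda>i. s i \<in> Sph \<and> x \<in> Sph) sequentially"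
        using ev1 by eventually_elim (use s Xi XS \<open>x\<in>X\<close> in blast)
      show "(\<lambda>i. sdist (s i) x) \<longlonglongrightarrow> 0"
        by (rule sq) (use s Xi XS \<open>x\<in>X\<close> in blast)
    qed
    hence "s \<longlonglongrightarrow> x" by (simp add: LIM_zero_iff)
    thus ?thesis using s by blast
  qed
  have H2: "v \<in> X" if vX: "\<forall>i\<ge>1. u i \<in> Xs i" and vlim: "u \<longlonglongrightarrow> v" for u v
  proof -
    define w where "w i = (SOME z. z \<in> X \<and> (i \<ge> 1 \<longrightarrow> sdist (u i) z < h i + inverse (real (Suc i))))" for i
    have w: "w i \<in> X \<and> (i \<ge> 1 \<longrightarrow> sdist (u i) (w i) < h i + inverse (real (Suc i)))" for i
    proof -
      have "\<exists>z. z \<in> X \<and> (i \<ge> 1 \<longrightarrow> sdist (u i) z < h i + inverse (real (Suc i)))"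
      proof (cases "i \<ge> 1")
        case True
        then show ?thesis
          using pick1[OF Xi(2)[OF True] XS(2) XS(1) vX[rule_format, OF True], of "inverse (real (Suc i))"]
          unfolding h_def by auto
      next
        case False
        then show ?thesis using XS(1) by auto
      qed
      from someI_ex[OF this] show ?thesis unfolding w_def by blast
    qed
    have "(\<lambda>i. u i - w i) \<longlonglongrightarrow> 0"
    proof (rule sdist_tendsto_diff)
      show "eventually (\<lambda>i. u i \<in> Sph \<and> w i \<in> Sph) sequentially"
        using ev1 by eventually_elim (use w vX Xi XS in blast)
      show "(\<lambda>i. sdist (u i) (w i)) \<longlonglongrightarrow> 0"
        by (rule sq) (use w vX Xi XS in blast)
    qed
    hence "(\<lambda>i. u i - (u i - w i)) \<longlonglongrightarrow> v - 0" by (intro tendsto_intros vlim)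
    hence "w \<longlonglongrightarrow> v" by simp
    thus ?thesis using XS(3) w closed_sequentially by blast
  qed
  have comb: "w /\<^sub>R norm w \<in> X"
    if "p \<in> X" "q \<in> X" "\<alpha> \<ge> 0" "\<beta> \<ge> 0" "w = \<alpha> *\<^sub>R p + \<beta> *\<^sub>R q" "w \<noteq> 0" for p q \<alpha> \<beta> w
  proof -
    obtain ps where ps: "\<forall>i\<ge>1. ps i \<in> Xs i" "ps \<longlonglongrightarrow> p" using H1 \<open>p\<in>X\<close> by blast
    obtain qs where qs: "\<forall>i\<ge>1. qs i \<in> Xs i" "qs \<longlonglongrightarrow> q" using H1 \<open>q\<in>X\<close> by blast
    define ws where "ws i = \<alpha> *\<^sub>R ps i + \<beta> *\<^sub>R qs i" for i
    have wsl: "ws \<longlonglongrightarrow> w" unfolding ws_def that(5) by (intro tendsto_intros ps qs)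
    have nw: "norm w > 0" using that by simp
    have "(\<lambda>i. norm (ws i)) \<longlonglongrightarrow> norm w" by (intro tendsto_intros wsl)
    hence evnz: "eventually (\<lambda>i. norm (ws i) > 0) sequentially"
      using nw order_tendstoD(1) by blast
    have ab: "\<alpha> + \<beta> > 0"
    proof (rule ccontr)
      assume "\<not> \<alpha> + \<beta> > 0" hence "\<alpha> = 0" "\<beta> = 0" using that by auto
      thus False using that by simp
    qed
    obtain N where N: "\<forall>i\<ge>N. norm (ws i) > 0" using evnz unfolding eventually_sequentially by blast
    define u where "u i = (if i \<ge> N then ws i /\<^sub>R norm (ws i) else ps i)" for i
    have uX: "\<forall>i\<ge>1. u i \<in> Xs i"
    proof (intro allI impI)
      fix i :: nat assume i1: "i \<ge> 1"
      show "u i \<in> Xs i"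
      proof (cases "i \<ge> N")
        case True
        define t where "t = \<beta> / (\<alpha> + \<beta>)"
        have t01: "0 \<le> t" "t \<le> 1" using ab that by (auto simp: t_def)
        have comb_eq: "(1 - t) *\<^sub>R ps i + t *\<^sub>R qs i = inverse (\<alpha> + \<beta>) *\<^sub>R ws i"
          using ab by (simp add: t_def ws_def field_simps scaleR_add_right scaleR_diff_left)
        have "((1 - t) *\<^sub>R ps i + t *\<^sub>R qs i) /\<^sub>R norm ((1 - t) *\<^sub>R ps i + t *\<^sub>R qs i)
              = ws i /\<^sub>R norm (ws i)"
          unfolding comb_eq using ab by (simp add: abs_of_pos)
        hence "ws i /\<^sub>R norm (ws i) \<in> sarc (ps i) (qs i)"
          unfolding sarc_def using t01 by (intro CollectI exI[of _ t]) simp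
        moreover have "sarc (ps i) (qs i) \<subseteq> Xs i" using Xi(3)[OF i1] ps qs i1 by blast
        ultimately show ?thesis using True unfolding u_def by auto
      next
        case False
        then show ?thesis using ps i1 by (simp add: u_def)
      qed
    qed
    have "(\<lambda>i. ws i /\<^sub>R norm (ws i)) \<longlonglongrightarrow> w /\<^sub>R norm w"
      using nw by (intro tendsto_intros wsl) auto
    hence "u \<longlonglongrightarrow> w /\<^sub>R norm w"
      by (rule Lim_transform_eventually) (auto simp: u_def eventually_sequentially)
    thus ?thesis using H2 uX by blast
  qed
  define K where "K = conic hull X"
  have Kexp: "K = {c *\<^sub>R x| c x. 0 \<le> c \<and> x \<in> X}" unfolding K_def by (rule conic_hull_explicit)
  have "0 \<notin> X" using XS(2) by (auto simp: Sph_def)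
  hence Kclosed: "closed K" unfolding K_def
    using XS compact_eq_bounded_closed bounded_subset[of "sphere 0 1" X]
    by (intro closed_conic_hull) (auto simp: Sph_def)
  have 0: "0 \<in> K" using XS(1) unfolding Kexp by force
  have Kconv: "convex K"
    unfolding convex_alt
  proof (intro ballI allI impI)
    fix x y and u :: real assume "x \<in> K" "y \<in> K" and u: "0 \<le> u \<and> u \<le> 1"
    then obtain a p b q where xp: "x = a *\<^sub>R p" "a \<ge> 0" "p \<in> X" and yq: "y = b *\<^sub>R q" "b \<ge> 0" "q \<in> X"
      unfolding Kexp by blast
    define w where "w = ((1 - u) * a) *\<^sub>R p + (u * b) *\<^sub>R q"
    have we: "(1 - u) *\<^sub>R x + u *\<^sub>R y = w" by (simp add: w_def xp yq)
    show "(1 - u) *\<^sub>R x + u *\<^sub>R y \<in> K"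
    proof (cases "w = 0")
      case True then show ?thesis using we 0 by simp
    next
      case False
      have "w /\<^sub>R norm w \<in> X"
        by (rule comb[OF \<open>p\<in>X\<close> \<open>q\<in>X\<close> _ _ w_def False]) (use u xp yq in auto)
      moreover have "w = norm w *\<^sub>R (w /\<^sub>R norm w)" using False by simp
      ultimately show ?thesis unfolding we Kexp by (metis (mono_tags, lifting) mem_Collect_eq norm_ge_zero)
    qed
  qed
  show ?thesis
  proof
    show "X \<subseteq> polar (polar X)"
      using XS(2) by (auto simp: polar_def hemi_def inner_commute)
    show "polar (polar X) \<subseteq> X"
    proof
      fix Q assume Qpp: "Q \<in> polar (polar X)"
      show "Q \<in> X"
      proof (rule ccontr)
        assume "Q \<notin> X"
        have QS: "Q \<in> Sph" using Qpp by (simp add: polar_def)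
        have "Q \<notin> K"
        proof
          assume "Q \<in> K"
          then obtain c x where Qc: "Q = c *\<^sub>R x" "c \<ge> 0" "x \<in> X" unfolding Kexp by blast
          have "norm Q = 1" "norm x = 1" using QS XS(2) Qc by (auto simp: Sph_def)
          hence "c = 1" using Qc by simp
          thus False using Qc \<open>Q \<notin> X\<close> by simp
        qed
        then obtain a b where ab: "a \<bullet> Q < b" "\<forall>x\<in>K. a \<bullet> x > b"
          using separating_hyperplane_closed_point[OF Kconv Kclosed] by blast
        have b0: "b < 0" using ab 0 by force
        have ax: "a \<bullet> x \<ge> 0" if "x \<in> X" for x
        proof (rule ccontr)
          assume neg: "\<not> a \<bullet> x \<ge> 0"
          define c where "c = b / (a \<bullet> x)"
          have c0: "c \<ge> 0" using b0 neg by (auto simp: c_def divide_nonpos_neg)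
          have "c *\<^sub>R x \<in> K" unfolding Kexp using c0 that by blast
          hence "a \<bullet> (c *\<^sub>R x) > b" using ab by blast
          moreover have "a \<bullet> (c *\<^sub>R x) = b" using neg by (simp add: c_def)
          ultimately show False by simp
        qed
        have aQ: "a \<bullet> Q < 0" using ab b0 by simp
        hence a0: "a \<noteq> 0" by auto
        define R where "R = a /\<^sub>R norm a"
        have RS: "R \<in> Sph" using a0 by (simp add: R_def Sph_def)
        have "R \<in> polar X"
          using RS ax a0 by (auto simp: polar_def hemi_def R_def inner_commute)
        hence "R \<bullet> Q \<ge> 0" using Qpp by (auto simp: polar_def hemi_def)
        moreover have "R \<bullet> Q < 0" using aQ a0 by (simp add: R_def mult_pos_neg)
        ultimately show False by simp
      qed
    qed
  qed
qed

end
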